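(* Let $n\ge 1$ and let $\omega\subset\mathbb{R}^n$ be a non-empty open set. Then there exists a constant $C=C(\omega)>1$ such that for every $N\in\mathbb{N}$ and every $f\in\mathcal{E}_N$, $$\|f\|_{L^2(\mathbb{R}^n)}\le C\,e^{\frac12 N\ln(N+1)+CN}\,\|f\|_{L^2(\omega)}.$$
   Context: The one-dimensional Hermite functions are $\phi_k(x)=\frac{(-1)^k}{\sqrt{2^k k!\sqrt{\pi}}}e^{x^2/2}\frac{d^k}{dx^k}(e^{-x^2})$, $k\in\mathbb{N}=\{0,1,2,\dots\}$, $x\in\mathbb{R}$. For $\alpha=(\alpha_1,\dots,\alpha_n)\in\mathbb{N}^n$ and $x\in\mathbb{R}^n$, $\Phi_\alpha(x)=\prod_{j=1}^n\phi_{\alpha_j}(x_j)$, and $|\alpha|=\alpha_1+\dots+\alpha_n$. For $N\in\mathbb{N}$, $\mathcal{E}_N=\mathrm{Span}_{\mathbb{C}}\{\Phi_\alpha:\alpha\in\mathbb{N}^n,\ |\alpha|\le N\}$. *)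

theory Defs
  imports "HOL-Analysis.Analysis"
begin

definition hermite_fun :: "nat \<Rightarrow> real \<Rightarrow> real" where
  "hermite_fun k x =
     (-1) ^ k / sqrt (2 ^ k * fact k * sqrt pi) * exp (x\<^sup>2 / 2)
       * (deriv ^^ k) (\<lambda>t. exp (- (t\<^sup>2))) x"

definition hermite_multi :: "('n::finite \<Rightarrow> nat) \<Rightarrow> real ^ 'n \<Rightarrow> real" where
  "hermite_multi \<alpha> x = (\<Prod>j\<in>UNIV. hermite_fun (\<alpha> j) (x $ j))"

definition multi_len :: "('n::finite \<Rightarrow> nat) \<Rightarrow> nat" where
  "multi_len \<alpha> = (\<Sum>j\<in>UNIV. \<alpha> j)"

definition hermite_space :: "nat \<Rightarrow> (real ^ 'n::finite \<Rightarrow> complex) set" where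
  "hermite_space N =
     {f. \<exists>c :: ('n \<Rightarrow> nat) \<Rightarrow> complex.
           f = (\<lambda>x. \<Sum>\<alpha>\<in>{\<alpha>. multi_len \<alpha> \<le> N}. c \<alpha> * complex_of_real (hermite_multi \<alpha> x))}"

definition L2_norm_on :: "(real ^ 'n::finite) set \<Rightarrow> (real ^ 'n \<Rightarrow> complex) \<Rightarrow> real" where
  "L2_norm_on S f = sqrt (LINT x:S|lborel. (cmod (f x))\<^sup>2)"

end

theory Submission
  imports Defs "HOL-Probability.Distributions"
begin


lemma hermite_deriv_poly:
  "\<exists>q::real poly. degree q \<le> k \<and> (deriv ^^ k) (\<lambda>t. exp (- (t\<^sup>2))) = (\<lambda>t. poly q t * exp (- (t\<^sup>2)))"
proof (induction k)
  case 0
  show ?case by (rule exI[of _ 1]) auto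
next
  case (Suc k)
  then obtain q :: "real poly" where dq: "degree q \<le> k" and eq: "(deriv ^^ k) (\<lambda>t. exp (- (t\<^sup>2))) = (\<lambda>t. poly q t * exp (- (t\<^sup>2)))" by blast
  define q' where "q' = pderiv q - [:0,2:] * q"
  have "degree q' \<le> Suc k"
    unfolding q'_def
  proof (rule degree_diff_le)
    show "degree (pderiv q) \<le> Suc k" using dq by (simp add: degree_pderiv)
    have "degree ([:0,2:] * q) \<le> degree [:0,2::real:] + degree q" by (rule degree_mult_le)
    also have "\<dots> \<le> Suc k" using dq by simp
    finally show "degree ([:0,2:] * q) \<le> Suc k" .
  qed
  moreover have "(deriv ^^ Suc k) (\<lambda>t. exp (- (t\<^sup>2))) = (\<lambda>t. poly q' t * exp (- (t\<^sup>2)))"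
  proof
    fix t :: real
    have d: "((\<lambda>t. poly q t * exp (- (t\<^sup>2))) has_real_derivative
        (poly (pderiv q) t * exp (- (t\<^sup>2)) + poly q t * (exp (- (t\<^sup>2)) * (- (2 * t))))) (at t)"
      by (auto intro!: derivative_eq_intros simp: power2_eq_square)
    have "(deriv ^^ Suc k) (\<lambda>t. exp (- (t\<^sup>2))) t = deriv (\<lambda>t. poly q t * exp (- (t\<^sup>2))) t"
      using eq by simp
    also have "\<dots> = poly q' t * exp (- (t\<^sup>2))"
      using DERIV_imp_deriv[OF d] by (simp add: q'_def algebra_simps)
    finally show "(deriv ^^ Suc k) (\<lambda>t. exp (- (t\<^sup>2))) t = poly q' t * exp (- (t\<^sup>2))" .
  qed
  ultimately show ?case by blast
qed

lemma hermite_fun_poly: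
  "\<exists>q::real poly. degree q \<le> k \<and> (\<forall>x. hermite_fun k x = poly q x * exp (- (x\<^sup>2) / 2))"
proof -
  obtain q :: "real poly" where dq: "degree q \<le> k" and eq: "(deriv ^^ k) (\<lambda>t. exp (- (t\<^sup>2))) = (\<lambda>t. poly q t * exp (- (t\<^sup>2)))"
    using hermite_deriv_poly by blast
  define c where "c = (-1) ^ k / sqrt (2 ^ k * fact k * sqrt pi :: real)"
  have "hermite_fun k x = poly (smult c q) x * exp (- (x\<^sup>2) / 2)" for x
  proof -
    have "exp (x\<^sup>2 / 2) * exp (- (x\<^sup>2)) = exp (- (x\<^sup>2) / 2)"
      by (simp flip: exp_add)
    then show ?thesis unfolding hermite_fun_def eq c_def[symmetric]
      by (simp add: algebra_simps)
  qed
  moreover have "degree (smult c q) \<le> k" using dq by simp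
  ultimately show ?thesis by blast
qed



definition linepoly :: "nat \<Rightarrow> ('a::real_vector \<Rightarrow> complex) \<Rightarrow> bool" where
  "linepoly N P \<longleftrightarrow> (\<forall>y v. \<exists>p. degree p \<le> N \<and> (\<forall>t. P (y + t *\<^sub>R v) = poly p (complex_of_real t)))"

definition hq :: "nat \<Rightarrow> real poly" where
  "hq k = (SOME q. degree q \<le> k \<and> (\<forall>x. hermite_fun k x = poly q x * exp (- (x\<^sup>2) / 2)))"

lemma hq: "degree (hq k) \<le> k" "hermite_fun k x = poly (hq k) x * exp (- (x\<^sup>2) / 2)"
  using someI_ex[OF hermite_fun_poly[of k]] unfolding hq_def[symmetric] by auto

lemma poly_map_of_real: "poly (map_poly of_real p) (of_real x) = (of_real (poly p x) :: complex)"
  by (induction p) (auto simp: map_poly_pCons)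

lemma norm_sq_vec: "(norm (x :: real ^ 'n))\<^sup>2 = (\<Sum>j\<in>UNIV. (x $ j)\<^sup>2)"
proof -
  have "(norm x)\<^sup>2 = inner x x" by (rule power2_norm_eq_inner)
  then show ?thesis by (simp add: inner_vec_def power2_eq_square)
qed

lemma hermite_multi_eq:
  "hermite_multi \<alpha> x = (\<Prod>j\<in>UNIV. poly (hq (\<alpha> j)) (x $ j)) * exp (- ((norm x)\<^sup>2) / 2)"
proof -
  have "hermite_multi \<alpha> x = (\<Prod>j\<in>UNIV. poly (hq (\<alpha> j)) (x $ j)) * (\<Prod>j\<in>UNIV. exp (- ((x $ j)\<^sup>2) / 2))"
    unfolding hermite_multi_def hq(2) by (simp add: prod.distrib)
  also have "(\<Prod>j\<in>UNIV. exp (- ((x $ j)\<^sup>2) / 2)) = exp (\<Sum>j\<in>UNIV. - ((x $ j)\<^sup>2) / 2)"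
    by (simp add: exp_sum)
  also have "(\<Sum>j\<in>UNIV. - ((x $ j)\<^sup>2) / 2) = - ((norm x)\<^sup>2) / 2"
    by (simp add: norm_sq_vec sum_negf sum_divide_distrib)
  finally show ?thesis .
qed

definition Pol :: "(('n::finite \<Rightarrow> nat) \<Rightarrow> complex) \<Rightarrow> nat \<Rightarrow> real ^ 'n \<Rightarrow> complex" where
  "Pol c N x = (\<Sum>\<alpha>\<in>{\<alpha>. multi_len \<alpha> \<le> N}. c \<alpha> * complex_of_real (\<Prod>j\<in>UNIV. poly (hq (\<alpha> j)) (x $ j)))"

lemma hermite_space_eq:
  assumes "f \<in> hermite_space N"
  obtains c where "\<And>x. f x = Pol c N x * complex_of_real (exp (- ((norm x)\<^sup>2) / 2))"
proof -
  from assms obtain c where f: "f = (\<lambda>x. \<Sum>\<alpha>\<in>{\<alpha>. multi_len \<alpha> \<le> N}. c \<alpha> * complex_of_real (hermite_multi \<alpha> x))"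
    unfolding hermite_space_def by blast
  show ?thesis
    by (rule that[of c]) (simp add: f Pol_def hermite_multi_eq sum_distrib_right mult.assoc)
qed

lemma continuous_Pol: "continuous_on UNIV (Pol c N)"
  unfolding Pol_def by (intro continuous_intros)

lemma linepoly_Pol:
  fixes c :: "('n::finite \<Rightarrow> nat) \<Rightarrow> complex"
  shows "linepoly N (Pol c N)"
  unfolding linepoly_def
proof (intro allI)
  fix y v :: "real ^ 'n"
  define A where "A = {\<alpha>::'n\<Rightarrow>nat. multi_len \<alpha> \<le> N}"
  define Q where "Q \<alpha> = (\<Prod>j\<in>UNIV. pcompose (hq (\<alpha> j)) [:y $ j, v $ j:])" for \<alpha>
  define p where "p = (\<Sum>\<alpha>\<in>A. smult (c \<alpha>) (map_poly of_real (Q \<alpha>)))"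
  have degQ: "degree (Q \<alpha>) \<le> N" if "\<alpha> \<in> A" for \<alpha>
  proof -
    have "degree (Q \<alpha>) \<le> (\<Sum>j\<in>UNIV. degree (pcompose (hq (\<alpha> j)) [:y $ j, v $ j:]))"
      unfolding Q_def using degree_prod_sum_le[of UNIV "\<lambda>j. pcompose (hq (\<alpha> j)) [:y $ j, v $ j:]"] by (simp add: o_def)
    also have "\<dots> \<le> (\<Sum>j\<in>UNIV. \<alpha> j)"
    proof (rule sum_mono)
      fix j
      have "degree (pcompose (hq (\<alpha> j)) [:y $ j, v $ j:]) = degree (hq (\<alpha> j)) * degree [:y $ j, v $ j:]"
        by (rule degree_pcompose)
      also have "\<dots> \<le> \<alpha> j * 1"
        by (intro mult_le_mono hq(1)) simp
      finally show "degree (pcompose (hq (\<alpha> j)) [:y $ j, v $ j:]) \<le> \<alpha> j" by simp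
    qed
    also have "\<dots> \<le> N" using that unfolding A_def multi_len_def by simp
    finally show ?thesis .
  qed
  have "degree p \<le> N"
  proof (cases "finite A")
    case True
    show ?thesis unfolding p_def
    proof (rule degree_sum_le[OF True])
      fix \<alpha> assume "\<alpha> \<in> A"
      have "degree (smult (c \<alpha>) (map_poly of_real (Q \<alpha>) :: complex poly)) \<le> degree (map_poly of_real (Q \<alpha>) :: complex poly)"
        by (rule degree_smult_le)
      also have "\<dots> = degree (Q \<alpha>)" by (rule degree_map_poly) simp
      finally show "degree (smult (c \<alpha>) (map_poly of_real (Q \<alpha>) :: complex poly)) \<le> N"
        using degQ[OF \<open>\<alpha> \<in> A\<close>] by simp
    qed
  next
    case False then show ?thesis by (simp add: p_def)
  qed
  moreover have "Pol c N (y + t *\<^sub>R v) = poly p (complex_of_real t)" for t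
    unfolding Pol_def A_def[symmetric] p_def poly_sum
    by (intro sum.cong refl) (simp add: poly_map_of_real Q_def poly_prod poly_pcompose algebra_simps)
  ultimately show "\<exists>p. degree p \<le> N \<and> (\<forall>t. Pol c N (y + t *\<^sub>R v) = poly p (complex_of_real t))"
    by blast
qed



lemma prod_dist_fact:
  assumes "i \<le> N"
  shows "(\<Prod>j\<in>{..N}-{i}. \<bar>real i - real j\<bar>) = fact i * fact (N - i)"
proof -
  have split: "{..N}-{i} = {0..<i} \<union> {Suc i..N}" using assms by auto
  have d: "{0..<i} \<inter> {Suc i..N} = {}" by auto
  have 1: "(\<Prod>j\<in>{0..<i}. \<bar>real i - real j\<bar>) = fact i"
  proof -
    have "(\<Prod>j\<in>{0..<i}. \<bar>real i - real j\<bar>) = (\<Prod>j\<in>{0..<i}. real (i - j))"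
      by (intro prod.cong) auto
    also have "\<dots> = fact i" by (simp add: fact_prod_rev[of i])
    finally show ?thesis .
  qed
  have 2: "(\<Prod>j\<in>{Suc i..N}. \<bar>real i - real j\<bar>) = fact (N - i)"
  proof -
    have "(\<Prod>j\<in>{Suc i..N}. \<bar>real i - real j\<bar>) = (\<Prod>k\<in>{0..<N-i}. real (Suc k))"
      by (rule prod.reindex_bij_witness[of _ "\<lambda>k. Suc k + i" "\<lambda>j. j - Suc i"]) auto
    also have "\<dots> = fact (N - i)" by (simp add: fact_prod_Suc[of "N-i"])
    finally show ?thesis .
  qed
  show ?thesis unfolding split by (subst prod.union_disjoint) (use d 1 2 in auto)
qed

lemma pow_div_fact_le_exp:
  fixes x :: real assumes "0 \<le> x" shows "x ^ n / fact n \<le> exp x"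
proof -
  have "summable (\<lambda>k. x ^ k /\<^sub>R fact k)" using exp_converges[of x] by (simp add: sums_iff)
  then have "(\<Sum>k\<in>{n}. x ^ k /\<^sub>R fact k) \<le> (\<Sum>k. x ^ k /\<^sub>R fact k)"
    using sum_le_suminf[of "\<lambda>k. x ^ k /\<^sub>R fact k" "{n}"] assms by auto
  then show ?thesis using exp_converges[of x] by (simp add: sums_iff divide_inverse mult.commute)
qed

lemma sum_inv_fact: "(\<Sum>i\<le>N. 1 / (fact i * fact (N - i)) :: real) = 2 ^ N / fact N"
proof -
  have "(\<Sum>i\<le>N. 1 / (fact i * fact (N - i)) :: real) = (\<Sum>i\<le>N. real (N choose i) / fact N)"
    by (intro sum.cong) (auto simp: binomial_fact)
  also have "\<dots> = real (\<Sum>i\<le>N. N choose i) / fact N"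
    by (simp add: sum_divide_distrib)
  also have "\<dots> = 2 ^ N / fact N" by (simp add: choose_row_sum)
  finally show ?thesis .
qed

lemma lagrange_coeff_sum:
  assumes "0 < \<tau>"
  shows "(\<Sum>i\<le>N. (real N / \<tau>) ^ N / (fact i * fact (N - i))) \<le> (2 * exp 1 / \<tau>) ^ N"
proof -
  have "(\<Sum>i\<le>N. (real N / \<tau>) ^ N / (fact i * fact (N - i))) = (real N / \<tau>) ^ N * (2 ^ N / fact N)"
    by (simp add: sum_inv_fact[symmetric] sum_distrib_left)
  also have "\<dots> = (2 / \<tau>) ^ N * (real N ^ N / fact N)"
    by (simp add: power_divide power_mult_distrib)
  also have "\<dots> \<le> (2 / \<tau>) ^ N * exp (real N)"
    by (intro mult_left_mono pow_div_fact_le_exp) (use assms in auto)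
  also have "\<dots> = (2 * exp 1 / \<tau>) ^ N"
    by (simp add: power_divide power_mult_distrib exp_of_nat_mult[symmetric])
  finally show ?thesis .
qed



lemma lagrange_bound:
  fixes p :: "complex poly"
  assumes deg: "degree p \<le> N" and tau: "0 < \<tau>" "\<tau> \<le> 1"
  shows "cmod (poly p 1) \<le> (\<Sum>i\<le>N. (real N / \<tau>) ^ N / (fact i * fact (N - i)) *
            cmod (poly p (of_real (real i * \<tau> / real N))))"
proof (cases "N = 0")
  case True
  then obtain a where "p = [:a:]" using deg degree0_coeffs by auto
  then show ?thesis using True by simp
next
  case False
  then have Npos: "0 < real N" by simp
  define t where "t i = complex_of_real (real i * \<tau> / real N)" for i
  have tinj: "t i = t j \<longleftrightarrow> i = j" for i j
    using Npos tau by (auto simp: t_def)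
  define w where "w i = (\<Prod>j\<in>{..N}-{i}. t i - t j)" for i
  have wnz: "w i \<noteq> 0" for i
    unfolding w_def by (subst prod_zero_iff) (auto simp: tinj)
  define L where "L = (\<Sum>i\<le>N. smult (poly p (t i) / w i) (\<Prod>j\<in>{..N}-{i}. [:- t j, 1:]))"
  have polyL: "poly L z = (\<Sum>i\<le>N. poly p (t i) / w i * (\<Prod>j\<in>{..N}-{i}. z - t j))" for z
    by (simp add: L_def poly_sum poly_prod)
  have Lt: "poly L (t k) = poly p (t k)" if "k \<le> N" for k
  proof -
    have "poly L (t k) = poly p (t k) / w k * (\<Prod>j\<in>{..N}-{k}. t k - t j)
          + (\<Sum>i\<in>{..N}-{k}. poly p (t i) / w i * (\<Prod>j\<in>{..N}-{i}. t k - t j))"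
      unfolding polyL using that by (subst sum.remove[of _ k]) auto
    also have "(\<Sum>i\<in>{..N}-{k}. poly p (t i) / w i * (\<Prod>j\<in>{..N}-{i}. t k - t j)) = 0"
    proof (rule sum.neutral, intro ballI)
      fix i assume "i \<in> {..N}-{k}"
      then have "k \<in> {..N}-{i}" using that by auto
      then have "(\<Prod>j\<in>{..N}-{i}. t k - t j) = 0"
        by (subst prod_zero_iff) auto
      then show "poly p (t i) / w i * (\<Prod>j\<in>{..N}-{i}. t k - t j) = 0" by simp
    qed
    finally show ?thesis using wnz[of k] by (simp add: w_def)
  qed
  have degL: "degree L \<le> N"
    unfolding L_def
  proof (rule degree_sum_le)
    fix i assume "i \<in> {..N}"
    have "degree (\<Prod>j\<in>{..N}-{i}. [:- t j, 1:]) \<le> (\<Sum>j\<in>{..N}-{i}. degree [:- t j, 1:])"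
      using degree_prod_sum_le[of "{..N}-{i}" "\<lambda>j. [:- t j, 1:]"] by (simp add: o_def)
    also have "\<dots> = card ({..N}-{i})" by simp
    also have "\<dots> = N" using \<open>i \<in> {..N}\<close> by simp
    finally show "degree (smult (poly p (t i) / w i) (\<Prod>j\<in>{..N}-{i}. [:- t j, 1:])) \<le> N"
      using degree_smult_le order_trans by blast
  qed simp
  have cardA: "card (t ` {..N}) = Suc N"
    by (subst card_image) (auto simp: inj_on_def tinj)
  have pL: "p = L"
    by (rule poly_eqI_degree[of "t ` {..N}"]) (use Lt deg degL cardA in auto)
  have pp: "poly p 1 = poly L 1" using pL by (rule arg_cong)
  have "cmod (poly p 1) = cmod (\<Sum>i\<le>N. poly p (t i) / w i * (\<Prod>j\<in>{..N}-{i}. 1 - t j))"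
    unfolding pp by (rule arg_cong[OF polyL])
  also have "\<dots> \<le> (\<Sum>i\<le>N. cmod (poly p (t i) / w i * (\<Prod>j\<in>{..N}-{i}. 1 - t j)))"
    by (rule norm_sum)
  also have "\<dots> \<le> (\<Sum>i\<le>N. (real N / \<tau>) ^ N / (fact i * fact (N - i)) * cmod (poly p (t i)))"
  proof (rule sum_mono)
    fix i assume i: "i \<in> {..N}"
    have n1: "cmod (\<Prod>j\<in>{..N}-{i}. 1 - t j) \<le> 1"
    proof -
      have "cmod (\<Prod>j\<in>{..N}-{i}. 1 - t j) = (\<Prod>j\<in>{..N}-{i}. cmod (1 - t j))"
        by (simp add: prod_norm)
      also have "\<dots> \<le> 1"
      proof (rule prod_le_1)
        fix j assume j: "j \<in> {..N}-{i}"
        have "real j * \<tau> / real N \<le> \<tau>" using j Npos tau by (auto simp: field_simps)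
        moreover have "0 \<le> real j * \<tau> / real N" using tau Npos by simp
        ultimately have "0 \<le> 1 - real j * \<tau> / real N" "1 - real j * \<tau> / real N \<le> 1" using tau by auto
        moreover have "1 - t j = complex_of_real (1 - real j * \<tau> / real N)" unfolding t_def by simp
        then have "cmod (1 - t j) = \<bar>1 - real j * \<tau> / real N\<bar>" by (simp only: norm_of_real)
        ultimately show "0 \<le> cmod (1 - t j) \<and> cmod (1 - t j) \<le> 1" by linarith
      qed
      finally show ?thesis .
    qed
    have nw: "cmod (w i) = (\<tau> / real N) ^ N * (fact i * fact (N - i))"
    proof -
      have "cmod (w i) = (\<Prod>j\<in>{..N}-{i}. (\<tau> / real N) * \<bar>real i - real j\<bar>)"
        unfolding w_def prod_norm[symmetric]
      proof (intro prod.cong refl)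
        fix j
        have e: "real i * \<tau> / real N - real j * \<tau> / real N = (\<tau> / real N) * (real i - real j)"
          by (simp add: diff_divide_distrib[symmetric] algebra_simps)
        have "t i - t j = complex_of_real ((\<tau> / real N) * (real i - real j))"
          unfolding t_def of_real_diff[symmetric] e ..
        then have "cmod (t i - t j) = \<bar>(\<tau> / real N) * (real i - real j)\<bar>" by (simp only: norm_of_real)
        also have "\<dots> = \<tau> / real N * \<bar>real i - real j\<bar>" using tau Npos by (simp add: abs_mult)
        finally show "cmod (t i - t j) = \<tau> / real N * \<bar>real i - real j\<bar>" .
      qed
      also have "\<dots> = (\<tau> / real N) ^ N * (fact i * fact (N - i))"
      proof -
        have "(\<Prod>j\<in>{..N}-{i}. (\<tau> / real N) * \<bar>real i - real j\<bar>)
           = (\<Prod>j\<in>{..N}-{i}. (\<tau> / real N)) * (\<Prod>j\<in>{..N}-{i}. \<bar>real i - real j\<bar>)"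
          by (rule prod.distrib)
        also have "(\<Prod>j\<in>{..N}-{i}. (\<tau> / real N)) = (\<tau> / real N) ^ N"
          using i by simp
        finally show ?thesis using prod_dist_fact[of i N] i by simp
      qed
      finally show ?thesis .
    qed
    have "cmod (poly p (t i) / w i * (\<Prod>j\<in>{..N}-{i}. 1 - t j))
        = cmod (poly p (t i)) / cmod (w i) * cmod (\<Prod>j\<in>{..N}-{i}. 1 - t j)"
      by (simp add: norm_mult norm_divide)
    also have "\<dots> \<le> cmod (poly p (t i)) / cmod (w i)"
      using n1 by (intro mult_left_le) auto
    also have "\<dots> = (real N / \<tau>) ^ N / (fact i * fact (N - i)) * cmod (poly p (t i))"
      unfolding nw using tau Npos by (simp add: power_divide)
    finally show "cmod (poly p (t i) / w i * (\<Prod>j\<in>{..N}-{i}. 1 - t j))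
        \<le> (real N / \<tau>) ^ N / (fact i * fact (N - i)) * cmod (poly p (t i))" .
  qed
  finally show ?thesis unfolding t_def .
qed

lemma lagrange_bound_sq:
  fixes p :: "complex poly"
  assumes deg: "degree p \<le> N" and tau: "0 < \<tau>" "\<tau> \<le> 1"
  shows "(cmod (poly p 1))\<^sup>2 \<le> ((2 * exp 1 / \<tau>) ^ N)\<^sup>2 *
            (\<Sum>i\<le>N. (cmod (poly p (of_real (real i * \<tau> / real N))))\<^sup>2)"
proof -
  define a where "a i = (real N / \<tau>) ^ N / (fact i * fact (N - i))" for i
  define b where "b i = cmod (poly p (of_real (real i * \<tau> / real N)))" for i
  have a0: "0 \<le> a i" for i using tau by (simp add: a_def)
  have S: "(\<Sum>i\<le>N. a i) \<le> (2 * exp 1 / \<tau>) ^ N"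
    unfolding a_def by (rule lagrange_coeff_sum[OF tau(1)])
  have A: "(\<Sum>i\<le>N. (a i)\<^sup>2) \<le> ((2 * exp 1 / \<tau>) ^ N)\<^sup>2"
  proof -
    have "(\<Sum>i\<le>N. (a i)\<^sup>2) \<le> (\<Sum>i\<le>N. a i * (\<Sum>k\<le>N. a k))"
      unfolding power2_eq_square
      by (intro sum_mono mult_left_mono member_le_sum) (auto simp: a0)
    also have "\<dots> = (\<Sum>i\<le>N. a i)\<^sup>2" by (simp add: power2_eq_square sum_distrib_right)
    also have "\<dots> \<le> ((2 * exp 1 / \<tau>) ^ N)\<^sup>2"
      using S by (intro power_mono) (auto intro: sum_nonneg a0)
    finally show ?thesis .
  qed
  have "(cmod (poly p 1))\<^sup>2 \<le> (\<Sum>i\<le>N. a i * b i)\<^sup>2"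
    using lagrange_bound[OF assms] by (intro power_mono) (auto simp: a_def b_def)
  also have "\<dots> \<le> (\<Sum>i\<le>N. (a i)\<^sup>2) * (\<Sum>i\<le>N. (b i)\<^sup>2)"
    by (rule Cauchy_Schwarz_ineq_sum)
  also have "\<dots> \<le> ((2 * exp 1 / \<tau>) ^ N)\<^sup>2 * (\<Sum>i\<le>N. (b i)\<^sup>2)"
    using A by (intro mult_right_mono) (auto intro: sum_nonneg)
  finally show ?thesis by (simp add: b_def)
qed



lemma nn_integral_affine_vec:
  fixes g :: "real ^ 'n::finite \<Rightarrow> ennreal"
  assumes [measurable]: "g \<in> borel_measurable borel" and c: "c \<noteq> 0"
  shows "(\<integral>\<^sup>+x. g x \<partial>lborel) = ennreal (\<bar>c\<bar> ^ CARD('n)) * (\<integral>\<^sup>+x. g (t + c *\<^sub>R x) \<partial>lborel)"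
  by (subst lborel_affine[OF c, of t])
     (simp add: nn_integral_density nn_integral_distr nn_integral_cmult)

lemma gauss_finite:
  "(\<integral>\<^sup>+x. ennreal (exp (- ((norm (x :: real ^ 'n::finite))\<^sup>2) / 2)) \<partial>lborel) < \<infinity>"
proof -
  have eq: "exp (- ((norm x)\<^sup>2) / 2) = (\<Prod>b\<in>Basis. exp (- ((x \<bullet> b)\<^sup>2) / 2))" for x :: "real ^ 'n"
  proof -
    have "(norm x)\<^sup>2 = (\<Sum>b\<in>Basis. (x \<bullet> b)\<^sup>2)"
      unfolding power2_norm_eq_inner by (subst euclidean_inner) (simp add: power2_eq_square)
    then show ?thesis by (simp add: exp_sum[symmetric] sum_negf sum_divide_distrib)
  qed
  have "(\<integral>\<^sup>+x. ennreal (exp (- ((norm (x :: real ^ 'n))\<^sup>2) / 2)) \<partial>lborel)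
      = (\<integral>\<^sup>+x. (\<Prod>b\<in>(Basis :: (real^'n) set). ennreal (exp (- ((x \<bullet> b)\<^sup>2) / 2))) \<partial>lborel)"
    by (intro nn_integral_cong) (simp only: eq prod_ennreal[symmetric] exp_ge_zero)
  also have "\<dots> = (\<Prod>b\<in>(Basis :: (real^'n) set). (\<integral>\<^sup>+t. ennreal (exp (- (t\<^sup>2) / 2)) \<partial>lborel))"
    by (rule nn_integral_lborel_prod) auto
  also have "\<dots> < \<infinity>"
  proof -
    have "(\<integral>\<^sup>+t. ennreal (std_normal_density t) \<partial>lborel) < \<infinity>"
    proof -
      have "(\<integral>\<^sup>+t. ennreal (norm (std_normal_density t)) \<partial>lborel) < \<infinity>"
        using integrable_normal_density[of 1 0] unfolding integrable_iff_bounded by simp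
      then show ?thesis by (simp add: normal_density_nonneg)
    qed
    moreover have "(\<integral>\<^sup>+t. ennreal (exp (- (t\<^sup>2) / 2)) \<partial>lborel)
        = ennreal (sqrt (2 * pi)) * (\<integral>\<^sup>+t. ennreal (std_normal_density t) \<partial>lborel)"
      by (subst nn_integral_cmult[symmetric]) (auto simp: std_normal_density_def ennreal_mult''[symmetric])
    ultimately have "(\<integral>\<^sup>+t. ennreal (exp (- (t\<^sup>2) / 2)) \<partial>lborel) < \<infinity>"
      by (simp add: ennreal_mult_less_top)
    then show ?thesis by (simp add: power_less_top_ennreal)
  qed
  finally show ?thesis .
qed



lemma shrink_bound:
  fixes P :: "real ^ 'n::finite \<Rightarrow> complex" and x x0 :: "real ^ 'n"
  assumes meas[measurable]: "P \<in> borel_measurable borel" and r: "0 < r"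
    and s: "0 \<le> s" "s \<le> 1/2" "s * dist x x0 \<le> r / 2"
  shows "(\<integral>\<^sup>+y. indicator (ball x0 r) y * ennreal ((cmod (P (s *\<^sub>R x + (1 - s) *\<^sub>R y)))\<^sup>2) \<partial>lborel)
    \<le> ennreal (2 ^ CARD('n)) * (\<integral>\<^sup>+z. indicator (ball x0 (2*r)) z * ennreal ((cmod (P z))\<^sup>2) \<partial>lborel)"
proof -
  define G where "G z = indicator (ball x0 (2*r)) z * ennreal ((cmod (P z))\<^sup>2)" for z :: "real ^ 'n"
  have [measurable]: "ball x0 (2*r) \<in> sets borel" by simp
  have m1: "(\<lambda>z. cmod (P z)) \<in> borel_measurable borel" using measurable_compose[OF meas borel_measurable_norm] by (simp add: o_def)
  have [measurable]: "(\<lambda>z. ennreal ((cmod (P z))\<^sup>2)) \<in> borel_measurable borel"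
    using m1 by measurable
  have Gm[measurable]: "G \<in> borel_measurable borel" unfolding G_def by measurable
  have c: "(1 - s) \<noteq> 0" using s by simp
  have inball: "s *\<^sub>R x + (1 - s) *\<^sub>R y \<in> ball x0 (2*r)" if "y \<in> ball x0 r" for y
  proof -
    have "s *\<^sub>R x + (1 - s) *\<^sub>R y - x0 = s *\<^sub>R (x - x0) + (1 - s) *\<^sub>R (y - x0)"
      by (simp add: algebra_simps)
    then have "norm (s *\<^sub>R x + (1 - s) *\<^sub>R y - x0) \<le> s * norm (x - x0) + (1 - s) * norm (y - x0)"
      using s norm_triangle_ineq[of "s *\<^sub>R (x - x0)" "(1 - s) *\<^sub>R (y - x0)"] by simp
    also have "\<dots> < 2 * r"
    proof -
      have "norm (y - x0) < r" using that by (simp add: dist_norm norm_minus_commute dist_commute)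
      moreover have "(1 - s) * norm (y - x0) \<le> norm (y - x0)" using s by (intro mult_left_le_one_le) auto
      ultimately have "(1 - s) * norm (y - x0) \<le> r" by linarith
      moreover have "s * norm (x - x0) \<le> r / 2" using s(3) by (simp add: dist_norm)
      ultimately show ?thesis using r by linarith
    qed
    finally show ?thesis by (simp add: dist_norm norm_minus_commute)
  qed
  have "(\<integral>\<^sup>+y. indicator (ball x0 r) y * ennreal ((cmod (P (s *\<^sub>R x + (1 - s) *\<^sub>R y)))\<^sup>2) \<partial>lborel)
      \<le> (\<integral>\<^sup>+y. G (s *\<^sub>R x + (1 - s) *\<^sub>R y) \<partial>lborel)"
  proof (intro nn_integral_mono)
    fix y
    show "indicator (ball x0 r) y * ennreal ((cmod (P (s *\<^sub>R x + (1 - s) *\<^sub>R y)))\<^sup>2) \<le> G (s *\<^sub>R x + (1 - s) *\<^sub>R y)"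
      using inball[of y] by (cases "y \<in> ball x0 r") (auto simp: G_def)
  qed
  also have "\<dots> \<le> ennreal (2 ^ CARD('n)) * (\<integral>\<^sup>+z. G z \<partial>lborel)"
  proof -
    define X where "X = (\<integral>\<^sup>+y. G (s *\<^sub>R x + (1 - s) *\<^sub>R y) \<partial>lborel)"
    have eq: "(\<integral>\<^sup>+z. G z \<partial>lborel) = ennreal (\<bar>1 - s\<bar> ^ CARD('n)) * X"
      unfolding X_def by (rule nn_integral_affine_vec[OF Gm c])
    have "ennreal (2 ^ CARD('n)) * (\<integral>\<^sup>+z. G z \<partial>lborel) = ennreal ((2 * (1 - s)) ^ CARD('n)) * X"
    proof -
      have "\<bar>1 - s\<bar> = 1 - s" using s by simp
      then have "ennreal (2 ^ CARD('n)) * (\<integral>\<^sup>+z. G z \<partial>lborel) = (ennreal (2 ^ CARD('n)) * ennreal ((1 - s) ^ CARD('n))) * X"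
        by (simp add: eq mult.assoc)
      also have "ennreal (2 ^ CARD('n)) * ennreal ((1 - s) ^ CARD('n)) = ennreal ((2 * (1 - s)) ^ CARD('n))"
      proof -
        have "ennreal (2 ^ CARD('n)) * ennreal ((1 - s) ^ CARD('n)) = ennreal (2 ^ CARD('n) * (1 - s) ^ CARD('n))"
          using s by (intro ennreal_mult''[symmetric]) simp
        also have "2 ^ CARD('n) * (1 - s) ^ CARD('n) = (2 * (1 - s)) ^ CARD('n)"
          by (rule power_mult_distrib[symmetric])
        finally show ?thesis .
      qed
      finally show ?thesis .
    qed
    moreover have "1 \<le> (2 * (1 - s)) ^ CARD('n)" using s by (intro one_le_power) simp
    moreover have "X \<le> ennreal ((2 * (1 - s)) ^ CARD('n)) * X"
    proof -
      have "X = ennreal 1 * X" by simp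
      also have "\<dots> \<le> ennreal ((2 * (1 - s)) ^ CARD('n)) * X"
        using \<open>1 \<le> (2 * (1 - s)) ^ CARD('n)\<close> by (intro mult_right_mono ennreal_leI) auto
      finally show ?thesis .
    qed
    ultimately show ?thesis unfolding X_def[symmetric] by simp
  qed
  finally show ?thesis by (simp add: G_def)
qed



lemma meas_sq:
  fixes P :: "real ^ 'n::finite \<Rightarrow> complex"
  assumes "P \<in> borel_measurable borel"
  shows "(\<lambda>y. indicator (ball x0 r) y * ennreal ((cmod (P (s *\<^sub>R x + (1 - s) *\<^sub>R y)))\<^sup>2)) \<in> borel_measurable borel"
proof -
  have a: "(\<lambda>y::real^'n. s *\<^sub>R x + (1 - s) *\<^sub>R y) \<in> borel_measurable borel"
    by (intro borel_measurable_continuous_onI continuous_intros)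
  have "(\<lambda>y. P (s *\<^sub>R x + (1 - s) *\<^sub>R y)) \<in> borel_measurable borel"
    using measurable_compose[OF a assms] by (simp add: o_def)
  then have m1: "(\<lambda>y. cmod (P (s *\<^sub>R x + (1 - s) *\<^sub>R y))) \<in> borel_measurable borel"
    using measurable_compose[OF _ borel_measurable_norm] by (simp add: o_def)
  have [measurable]: "ball x0 r \<in> sets borel" by simp
  show ?thesis using m1 by measurable
qed

lemma avg_bound:
  fixes P :: "real ^ 'n::finite \<Rightarrow> complex" and x x0 :: "real ^ 'n"
  assumes lp: "linepoly N P" and meas[measurable]: "P \<in> borel_measurable borel" and r: "0 < r"
  shows "emeasure lborel (ball x0 r) * ennreal ((cmod (P x))\<^sup>2)
    \<le> ennreal (((4 * exp 1 * (dist x x0 + r) / r) ^ N)\<^sup>2 * real (Suc N) * 2 ^ CARD('n))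
       * (\<integral>\<^sup>+z. indicator (ball x0 (2*r)) z * ennreal ((cmod (P z))\<^sup>2) \<partial>lborel)"
proof -
  define d where "d = dist x x0"
  have d0: "0 \<le> d" by (simp add: d_def)
  define \<tau> where "\<tau> = r / (2 * (d + r))"
  have tau: "0 < \<tau>" "\<tau> \<le> 1/2" using r d0 by (auto simp: \<tau>_def field_simps)
  have Leq: "2 * exp 1 / \<tau> = 4 * exp 1 * (d + r) / r" using r d0 by (simp add: \<tau>_def field_simps)
  define \<Lambda>2 where "\<Lambda>2 = ((2 * exp 1 / \<tau>) ^ N)\<^sup>2"
  define I where "I = (\<integral>\<^sup>+z. indicator (ball x0 (2*r)) z * ennreal ((cmod (P z))\<^sup>2) \<partial>lborel)"
  define s where "s i = real i * \<tau> / real N" for i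
  have sb: "0 \<le> s i \<and> s i \<le> \<tau>" if "i \<le> N" for i
  proof (cases "N = 0")
    case True then show ?thesis using tau by (simp add: s_def)
  next
    case False
    then have "real i / real N \<le> 1" using that by simp
    then have "real i / real N * \<tau> \<le> 1 * \<tau>" using tau by (intro mult_right_mono) auto
    then show ?thesis using tau by (simp add: s_def)
  qed
  have td: "\<tau> * d \<le> r / 2" using r d0 by (simp add: \<tau>_def field_simps)
  have sd: "s i * dist x x0 \<le> r / 2" if "i \<le> N" for i
  proof -
    have "s i * d \<le> \<tau> * d" using sb[OF that] d0 by (intro mult_right_mono) auto
    then show ?thesis using td by (simp add: d_def)
  qed
  define b where "b i y = (cmod (P (s i *\<^sub>R x + (1 - s i) *\<^sub>R y)))\<^sup>2" for i y
  have pw: "(cmod (P x))\<^sup>2 \<le> \<Lambda>2 * (\<Sum>i\<le>N. b i y)" for y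
  proof -
    obtain p where dp: "degree p \<le> N" and pe: "\<And>t. P (y + t *\<^sub>R (x - y)) = poly p (complex_of_real t)"
      using lp unfolding linepoly_def by blast
    have "P x = poly p 1" using pe[of 1] by simp
    moreover have "P (s i *\<^sub>R x + (1 - s i) *\<^sub>R y) = poly p (of_real (real i * \<tau> / real N))" for i
    proof -
      have "s i *\<^sub>R x + (1 - s i) *\<^sub>R y = y + s i *\<^sub>R (x - y)" by (simp add: algebra_simps)
      then show ?thesis using pe[of "s i"] by (simp add: s_def)
    qed
    ultimately show ?thesis
      using lagrange_bound_sq[OF dp tau(1)] tau by (simp add: b_def \<Lambda>2_def)
  qed
  have [measurable]: "ball x0 r \<in> sets lborel" by simp
  have mb: "(\<lambda>y. indicator (ball x0 r) y * ennreal (b i y)) \<in> borel_measurable borel" for i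
    unfolding b_def by (rule meas_sq[OF meas])
  have "emeasure lborel (ball x0 r) * ennreal ((cmod (P x))\<^sup>2)
      = (\<integral>\<^sup>+y. ennreal ((cmod (P x))\<^sup>2) * indicator (ball x0 r) y \<partial>lborel)"
    by (subst nn_integral_cmult_indicator) (auto simp: mult.commute)
  also have "\<dots> \<le> (\<integral>\<^sup>+y. ennreal \<Lambda>2 * (\<Sum>i\<le>N. indicator (ball x0 r) y * ennreal (b i y)) \<partial>lborel)"
  proof (intro nn_integral_mono)
    fix y
    have "ennreal ((cmod (P x))\<^sup>2) \<le> ennreal (\<Lambda>2 * (\<Sum>i\<le>N. b i y))"
      using pw[of y] by (rule ennreal_leI)
    also have "\<dots> = ennreal \<Lambda>2 * (\<Sum>i\<le>N. ennreal (b i y))"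
      by (simp add: ennreal_mult'' sum_nonneg b_def \<Lambda>2_def)
    finally show "ennreal ((cmod (P x))\<^sup>2) * indicator (ball x0 r) y
        \<le> ennreal \<Lambda>2 * (\<Sum>i\<le>N. indicator (ball x0 r) y * ennreal (b i y))"
      by (cases "y \<in> ball x0 r") auto
  qed
  also have "\<dots> = ennreal \<Lambda>2 * (\<Sum>i\<le>N. (\<integral>\<^sup>+y. indicator (ball x0 r) y * ennreal (b i y) \<partial>lborel))"
  proof -
    have ms: "(\<lambda>y. \<Sum>i\<le>N. indicator (ball x0 r) y * ennreal (b i y)) \<in> borel_measurable lborel"
      using mb by (intro borel_measurable_sum) simp
    have "(\<integral>\<^sup>+y. ennreal \<Lambda>2 * (\<Sum>i\<le>N. indicator (ball x0 r) y * ennreal (b i y)) \<partial>lborel)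
        = ennreal \<Lambda>2 * (\<integral>\<^sup>+y. (\<Sum>i\<le>N. indicator (ball x0 r) y * ennreal (b i y)) \<partial>lborel)"
      by (rule nn_integral_cmult[OF ms])
    also have "(\<integral>\<^sup>+y. (\<Sum>i\<le>N. indicator (ball x0 r) y * ennreal (b i y)) \<partial>lborel)
        = (\<Sum>i\<le>N. (\<integral>\<^sup>+y. indicator (ball x0 r) y * ennreal (b i y) \<partial>lborel))"
      by (rule nn_integral_sum) (use mb in simp)
    finally show ?thesis .
  qed
  also have "\<dots> \<le> ennreal \<Lambda>2 * (\<Sum>i\<le>N. ennreal (2 ^ CARD('n)) * I)"
  proof (intro mult_left_mono sum_mono)
    fix i assume "i \<in> {..N}"
    then have i: "i \<le> N" by simp
    have "s i \<le> 1/2" using sb[OF i] tau by linarith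
    then show "(\<integral>\<^sup>+y. indicator (ball x0 r) y * ennreal (b i y) \<partial>lborel) \<le> ennreal (2 ^ CARD('n)) * I"
      unfolding b_def I_def using shrink_bound[OF meas r, of "s i" x x0] sb[OF i] sd[OF i] by simp
  qed simp
  also have "\<dots> = ennreal (\<Lambda>2 * real (Suc N) * 2 ^ CARD('n)) * I"
    by (simp add: ennreal_mult'' \<Lambda>2_def mult.assoc ennreal_of_nat_eq_real_of_nat)
  finally show ?thesis unfolding Leq \<Lambda>2_def I_def d_def .
qed



lemma ediv:
  assumes h: "ennreal V * ennreal a \<le> ennreal k * I" and V: "0 < V" and k: "0 \<le> k" and a: "0 \<le> a"
  shows "ennreal a \<le> ennreal (k / V) * I"
proof (cases I rule: ennreal_cases)
  case (real i)
  have "ennreal (V * a) \<le> ennreal (k * i)"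
    using h real V k a by (simp add: ennreal_mult''[symmetric] ennreal_mult[symmetric])
  then have "V * a \<le> k * i" using real k by (simp add: ennreal_le_iff)
  then have "a \<le> k / V * i" using V by (simp add: field_simps mult.commute)
  then have "ennreal a \<le> ennreal (k / V * i)" by (rule ennreal_leI)
  also have "ennreal (k / V * i) = ennreal (k / V) * ennreal i"
    using real by (intro ennreal_mult'') simp
  finally show ?thesis using real by simp
next
  case top
  show ?thesis
  proof (cases "k = 0")
    case True
    then have "ennreal V * ennreal a \<le> 0" using h by simp
    then have "ennreal (V * a) \<le> 0" using V a by (simp add: ennreal_mult)
    then have "V * a \<le> 0" using V a by simp
    then have "a = 0" using V a by (simp add: mult_le_0_iff)
    then show ?thesis by simp
  next
    case False
    then have "0 < k / V" using k V by simp
    then have "ennreal (k / V) * top = top" using V False by (simp add: ennreal_mult_top)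
    then show ?thesis using top by simp
  qed
qed

lemma sq_pow_exp:
  fixes u :: real assumes "0 \<le> u"
  shows "u ^ (2*N) * exp (- (u\<^sup>2)) \<le> 2 ^ N * real N ^ N * exp (- (u\<^sup>2) / 2)"
proof -
  have "(u\<^sup>2 / 2) ^ N / fact N \<le> exp (u\<^sup>2 / 2)" by (rule pow_div_fact_le_exp) simp
  then have "(u\<^sup>2 / 2) ^ N \<le> fact N * exp (u\<^sup>2 / 2)" by (simp add: field_simps)
  also have "\<dots> \<le> real N ^ N * exp (u\<^sup>2 / 2)"
    using fact_le_power[of N] by (intro mult_right_mono) auto
  finally have h: "(u\<^sup>2 / 2) ^ N \<le> real N ^ N * exp (u\<^sup>2 / 2)" .
  have "(u\<^sup>2 / 2) ^ N = u ^ (2*N) / 2 ^ N" by (simp add: power_divide power_mult)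
  then have "u ^ (2*N) / 2 ^ N \<le> real N ^ N * exp (u\<^sup>2 / 2)" using h by simp
  then have "u ^ (2*N) \<le> (real N ^ N * exp (u\<^sup>2 / 2)) * 2 ^ N"
    by (subst (asm) pos_divide_le_eq) simp_all
  then have hu: "u ^ (2*N) \<le> 2 ^ N * real N ^ N * exp (u\<^sup>2 / 2)"
    by (metis mult.commute mult.assoc)
  have "u ^ (2*N) * exp (- (u\<^sup>2)) \<le> 2 ^ N * real N ^ N * exp (u\<^sup>2 / 2) * exp (- (u\<^sup>2))"
    using hu by (rule mult_right_mono) simp
  also have "\<dots> = 2 ^ N * real N ^ N * exp (- (u\<^sup>2) / 2)"
    by (simp add: mult.assoc exp_add[symmetric])
  finally show ?thesis .
qed

lemma sum_pow_le:
  fixes a b :: real assumes "0 \<le> a" "0 \<le> b"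
  shows "(a + b) ^ N \<le> 2 ^ N * (a ^ N + b ^ N)"
proof -
  have "(a + b) ^ N \<le> (2 * max a b) ^ N" using assms by (intro power_mono) auto
  also have "\<dots> = 2 ^ N * max a b ^ N" by (simp add: power_mult_distrib)
  also have "max a b ^ N \<le> a ^ N + b ^ N" using assms by (auto simp: max_def)
  then have "2 ^ N * max a b ^ N \<le> 2 ^ N * (a ^ N + b ^ N)" by simp
  finally show ?thesis .
qed

lemma PB:
  fixes x x0 :: "real ^ 'n::finite"
  assumes r: "0 < r"
  defines "A \<equiv> norm x0 + r"
  shows "((4 * exp 1 * (dist x x0 + r) / r) ^ N)\<^sup>2 * exp (- ((norm x)\<^sup>2))
    \<le> ((4 * exp 1 / r) ^ N)\<^sup>2 * 4 ^ N * (2 ^ N * real N ^ N + A ^ (2*N)) * exp (- ((norm x)\<^sup>2) / 2)"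
proof -
  define u where "u = norm x"
  have u0: "0 \<le> u" by (simp add: u_def)
  have A0: "0 \<le> A" using r by (simp add: A_def)
  have dl: "dist x x0 + r \<le> u + A"
    using norm_triangle_ineq4[of x x0] by (simp add: dist_norm u_def A_def)
  have e1: "((4 * exp 1 * (dist x x0 + r) / r) ^ N)\<^sup>2 = ((4 * exp 1 / r) ^ N)\<^sup>2 * (dist x x0 + r) ^ (2*N)"
  proof -
    have "4 * exp 1 * (dist x x0 + r) / r = (4 * exp 1 / r) * (dist x x0 + r)" by simp
    then have "(4 * exp 1 * (dist x x0 + r) / r) ^ N = (4 * exp 1 / r) ^ N * (dist x x0 + r) ^ N"
      by (simp only: power_mult_distrib)
    moreover have "((dist x x0 + r) ^ N)\<^sup>2 = (dist x x0 + r) ^ (2*N)"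
      by (metis power_mult mult.commute)
    ultimately show ?thesis by (simp only: power_mult_distrib)
  qed
  have "(dist x x0 + r) ^ (2*N) \<le> (u + A) ^ (2*N)"
    using dl r by (intro power_mono) auto
  also have "(u + A) ^ (2*N) = ((u + A)\<^sup>2) ^ N" by (simp add: power_mult)
  also have "\<dots> \<le> (2 * (u\<^sup>2 + A\<^sup>2)) ^ N"
  proof (rule power_mono)
    show "(u + A)\<^sup>2 \<le> 2 * (u\<^sup>2 + A\<^sup>2)"
    proof -
      have "(u + A)\<^sup>2 + (u - A)\<^sup>2 = 2 * (u\<^sup>2 + A\<^sup>2)" by (simp add: power2_eq_square algebra_simps)
      moreover have "0 \<le> (u - A)\<^sup>2" by simp
      ultimately show ?thesis by linarith
    qed
  qed simp
  also have "\<dots> = 2 ^ N * (u\<^sup>2 + A\<^sup>2) ^ N" by (rule power_mult_distrib)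
  also have "\<dots> \<le> 2 ^ N * (2 ^ N * ((u\<^sup>2) ^ N + (A\<^sup>2) ^ N))"
    by (intro mult_left_mono sum_pow_le) auto
  also have "\<dots> = 4 ^ N * (u ^ (2*N) + A ^ (2*N))"
  proof -
    have "(u\<^sup>2) ^ N = u ^ (2*N)" "(A\<^sup>2) ^ N = A ^ (2*N)" by (simp_all only: power_mult)
    moreover have "(2::real) ^ N * 2 ^ N = 4 ^ N"
      by (metis power_mult_distrib num_double numeral_times_numeral)
    ultimately show ?thesis by (simp only: mult.assoc[symmetric])
  qed
  finally have dp: "(dist x x0 + r) ^ (2*N) \<le> 4 ^ N * (u ^ (2*N) + A ^ (2*N))" .
  have "(dist x x0 + r) ^ (2*N) * exp (- (u\<^sup>2)) \<le> 4 ^ N * (u ^ (2*N) + A ^ (2*N)) * exp (- (u\<^sup>2))"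
    using dp by (intro mult_right_mono) auto
  also have "\<dots> = 4 ^ N * (u ^ (2*N) * exp (- (u\<^sup>2)) + A ^ (2*N) * exp (- (u\<^sup>2)))"
    by (simp add: algebra_simps)
  also have "\<dots> \<le> 4 ^ N * (2 ^ N * real N ^ N * exp (- (u\<^sup>2) / 2) + A ^ (2*N) * exp (- (u\<^sup>2) / 2))"
  proof -
    have "A ^ (2*N) * exp (- (u\<^sup>2)) \<le> A ^ (2*N) * exp (- (u\<^sup>2) / 2)"
      using A0 u0 by (intro mult_left_mono) auto
    then show ?thesis using sq_pow_exp[OF u0, of N] by (intro mult_left_mono add_mono) auto
  qed
  also have "\<dots> = 4 ^ N * (2 ^ N * real N ^ N + A ^ (2*N)) * exp (- (u\<^sup>2) / 2)"
    by (simp add: algebra_simps)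
  finally have main: "(dist x x0 + r) ^ (2*N) * exp (- (u\<^sup>2)) \<le> 4 ^ N * (2 ^ N * real N ^ N + A ^ (2*N)) * exp (- (u\<^sup>2) / 2)" .
  show ?thesis unfolding e1 u_def[symmetric]
    using mult_left_mono[OF main, of "((4 * exp 1 / r) ^ N)\<^sup>2"] by (simp add: mult.assoc)
qed



lemma const_bound:
  fixes Kc Bb :: real assumes K: "0 \<le> Kc" and B: "0 < Bb"
  obtains C where "C > 1" "\<And>N. sqrt (Kc * Bb ^ N * (real N + 1) ^ N)
      \<le> C * exp (1/2 * real N * ln (real N + 1) + C * real N)"
proof -
  define C where "C = max (sqrt Kc) \<bar>ln (sqrt Bb)\<bar> + 2"
  have C1: "C > 1" by (simp add: C_def)
  have "sqrt (Kc * Bb ^ N * (real N + 1) ^ N) \<le> C * exp (1/2 * real N * ln (real N + 1) + C * real N)" for N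
  proof -
    have e1: "sqrt ((real N + 1) ^ N) = exp (1/2 * real N * ln (real N + 1))"
    proof -
      have a: "exp (real N * ln (real N + 1)) = exp (ln (real N + 1)) ^ N" by (rule exp_of_nat_mult)
      have b: "exp (ln (real N + 1)) = real N + 1" by simp
      have c: "(exp (1/2 * real N * ln (real N + 1)))\<^sup>2 = exp (real N * ln (real N + 1))"
        by (simp add: power2_eq_square exp_add[symmetric])
      show ?thesis by (rule real_sqrt_unique) (use a b c in simp_all)
    qed
    have e2: "sqrt Bb ^ N \<le> exp (C * real N)"
    proof -
      have "exp (real N * ln (sqrt Bb)) = exp (ln (sqrt Bb)) ^ N" by (rule exp_of_nat_mult)
      then have "sqrt Bb ^ N = exp (real N * ln (sqrt Bb))" using B by simp
      also have "\<dots> \<le> exp (real N * C)"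
      proof (subst exp_le_cancel_iff, rule mult_left_mono)
        show "ln (sqrt Bb) \<le> C" unfolding C_def by linarith
      qed simp
      finally show ?thesis by (simp add: mult.commute)
    qed
    have e3: "sqrt Kc \<le> C" by (simp add: C_def)
    have "sqrt (Kc * Bb ^ N * (real N + 1) ^ N) = sqrt Kc * sqrt Bb ^ N * sqrt ((real N + 1) ^ N)"
      by (simp add: real_sqrt_mult real_sqrt_power)
    also have "\<dots> \<le> C * exp (C * real N) * exp (1/2 * real N * ln (real N + 1))"
      using e2 e3 C1 B by (intro mult_mono) (auto simp: e1)
    also have "\<dots> = C * exp (1/2 * real N * ln (real N + 1) + C * real N)"
      by (simp add: exp_add)
    finally show ?thesis .
  qed
  then show ?thesis using that C1 by blast
qed



lemma Mbound:
  fixes r A :: real assumes r: "0 < r" and A: "0 \<le> A"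
  shows "((4 * exp 1 / r) ^ N)\<^sup>2 * 4 ^ N * (2 ^ N * real N ^ N + A ^ (2*N)) * (real N + 1)
     \<le> 2 * ((4 * exp 1 / r)\<^sup>2 * 8 * (2 + A\<^sup>2)) ^ N * (real N + 1) ^ N"
proof -
  define q where "q = (4 * exp 1 / r)\<^sup>2"
  define Q where "Q = 2 + A\<^sup>2"
  define W where "W = (real N + 1) ^ N"
  have q0: "0 \<le> q" by (simp add: q_def)
  have Q2: "2 \<le> Q" by (simp add: Q_def)
  have W1: "1 \<le> W" by (simp add: W_def)
  have e1: "((4 * exp 1 / r) ^ N)\<^sup>2 = q ^ N" unfolding q_def by (metis power_mult mult.commute)
  have s1: "2 ^ N * real N ^ N \<le> Q ^ N * W"
    unfolding W_def by (intro mult_mono power_mono) (use Q2 in auto)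
  have s2: "A ^ (2*N) \<le> Q ^ N * W"
  proof -
    have "A ^ (2*N) = (A\<^sup>2) ^ N" by (simp add: power_mult)
    also have "\<dots> \<le> Q ^ N" by (intro power_mono) (auto simp: Q_def)
    also have "\<dots> \<le> Q ^ N * W" using W1 Q2 by simp
    finally show ?thesis .
  qed
  have S: "2 ^ N * real N ^ N + A ^ (2*N) \<le> 2 * (Q ^ N * W)" using s1 s2 by linarith
  have N1: "real N + 1 \<le> 2 ^ N"
  proof -
    have "N < 2 ^ N" by (rule less_exp)
    then have "real N + 1 \<le> real (2 ^ N)" by linarith
    then show ?thesis by simp
  qed
  have "((4 * exp 1 / r) ^ N)\<^sup>2 * 4 ^ N * (2 ^ N * real N ^ N + A ^ (2*N)) * (real N + 1)
      \<le> q ^ N * 4 ^ N * (2 * (Q ^ N * W)) * 2 ^ N"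
    unfolding e1 using q0 Q2 W1 S N1
    by (intro mult_mono) (auto intro!: mult_nonneg_nonneg)
  also have "\<dots> = 2 * ((q * 4 * Q * 2) ^ N * W)"
  proof -
    have "(q * 4 * Q * 2) ^ N = q ^ N * 4 ^ N * Q ^ N * 2 ^ N" by (simp only: power_mult_distrib)
    then show ?thesis by (simp only: ac_simps)
  qed
  also have "q * 4 * Q * 2 = q * 8 * Q" by simp
  finally show ?thesis unfolding q_def Q_def W_def by (simp add: mult.assoc)
qed

lemma L2_enn:
  fixes f :: "real ^ 'n::finite \<Rightarrow> complex"
  assumes fm: "f \<in> borel_measurable borel" and S: "S \<in> sets borel"
  shows "L2_norm_on S f = sqrt (enn2real (\<integral>\<^sup>+x. indicator S x * ennreal ((cmod (f x))\<^sup>2) \<partial>lborel))"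
proof -
  have m1: "(\<lambda>x. cmod (f x)) \<in> borel_measurable borel"
    using measurable_compose[OF fm borel_measurable_norm] by (simp add: o_def)
  have [measurable]: "S \<in> sets lborel" using S by simp
  have m2: "(\<lambda>x. indicator S x *\<^sub>R (cmod (f x))\<^sup>2) \<in> borel_measurable lborel"
    using m1 by measurable
  have "(LINT x:S|lborel. (cmod (f x))\<^sup>2) = enn2real (\<integral>\<^sup>+x. ennreal (indicator S x *\<^sub>R (cmod (f x))\<^sup>2) \<partial>lborel)"
    unfolding set_lebesgue_integral_def by (rule integral_eq_nn_integral[OF m2]) (auto simp: indicator_def)
  also have "(\<integral>\<^sup>+x. ennreal (indicator S x *\<^sub>R (cmod (f x))\<^sup>2) \<partial>lborel)
      = (\<integral>\<^sup>+x. indicator S x * ennreal ((cmod (f x))\<^sup>2) \<partial>lborel)"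
    by (intro nn_integral_cong) (auto simp: indicator_def)
  finally show ?thesis unfolding L2_norm_on_def by simp
qed



theorem mainTheorem1:
  fixes \<omega> :: "(real ^ 'n::finite) set"
  assumes "open \<omega>" and "\<omega> \<noteq> {}"
  shows "\<exists>C > 1. \<forall>N. \<forall>f \<in> hermite_space N.
           L2_norm_on UNIV f
             \<le> C * exp (1/2 * real N * ln (real N + 1) + C * real N) * L2_norm_on \<omega> f"
proof -
  obtain x0 where x0: "x0 \<in> \<omega>" using assms(2) by blast
  obtain e where e: "e > 0" "ball x0 e \<subseteq> \<omega>" using assms(1) x0 open_contains_ball by blast
  define r where "r = e / 2"
  have r: "0 < r" using e by (simp add: r_def)
  have B2: "ball x0 (2*r) \<subseteq> \<omega>" using e by (simp add: r_def)
  define Vr where "Vr = unit_ball_vol (real CARD('n)) * r ^ CARD('n)"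
  have Vr: "0 < Vr" using r by (simp add: Vr_def)
  have EV: "emeasure lborel (ball x0 r) = ennreal Vr"
    unfolding Vr_def using emeasure_ball[of r x0] r by simp
  define Gi where "Gi = (\<integral>\<^sup>+x. ennreal (exp (- ((norm (x :: real ^ 'n))\<^sup>2) / 2)) \<partial>lborel)"
  define Gr where "Gr = enn2real Gi"
  have GiGr: "Gi = ennreal Gr" using gauss_finite[where 'n='n] unfolding Gr_def Gi_def
    by (simp add: less_top)
  have Gr0: "0 \<le> Gr" by (simp add: Gr_def)
  define R where "R = norm x0 + 2 * r"
  define A where "A = norm x0 + r"
  have A0: "0 \<le> A" using r by (simp add: A_def)
  define Kc where "Kc = 2 * (2 ^ CARD('n) * Gr * exp (R\<^sup>2) / Vr)"
  define Bb where "Bb = (4 * exp 1 / r)\<^sup>2 * 8 * (2 + A\<^sup>2)"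
  have Kc0: "0 \<le> Kc" using Vr Gr0 by (simp add: Kc_def)
  have Bb0: "0 < Bb" using r by (simp add: Bb_def add_pos_nonneg)
  obtain C where C1: "C > 1" and Cb: "\<And>N. sqrt (Kc * Bb ^ N * (real N + 1) ^ N)
      \<le> C * exp (1/2 * real N * ln (real N + 1) + C * real N)"
    using const_bound[OF Kc0 Bb0] by blast
  have "\<forall>N. \<forall>f \<in> hermite_space N.
           L2_norm_on UNIV f
             \<le> C * exp (1/2 * real N * ln (real N + 1) + C * real N) * L2_norm_on \<omega> f"
  proof (intro allI ballI)
    fix N and f :: "real ^ 'n \<Rightarrow> complex"
    assume fH: "f \<in> hermite_space N"
    obtain c where fe: "\<And>x. f x = Pol c N x * complex_of_real (exp (- ((norm x)\<^sup>2) / 2))"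
      using hermite_space_eq[OF fH] by blast
    define P where "P = Pol c N"
    have Pc: "continuous_on UNIV P" unfolding P_def by (rule continuous_Pol)
    have Pm: "P \<in> borel_measurable borel" using Pc by (rule borel_measurable_continuous_onI)
    have lp: "linepoly N P" unfolding P_def by (rule linepoly_Pol)
    have feq: "f = (\<lambda>x. P x * complex_of_real (exp (- ((norm x)\<^sup>2) / 2)))"
      using fe by (auto simp: P_def)
    have fc: "continuous_on UNIV f" unfolding feq by (intro continuous_intros Pc) auto
    have fm: "f \<in> borel_measurable borel" using fc by (rule borel_measurable_continuous_onI)
    have fsq: "(cmod (f x))\<^sup>2 = (cmod (P x))\<^sup>2 * exp (- ((norm x)\<^sup>2))" for x
    proof -
      have "(cmod (f x))\<^sup>2 = (cmod (P x))\<^sup>2 * (exp (- ((norm x)\<^sup>2) / 2))\<^sup>2"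
        by (simp add: feq norm_mult power_mult_distrib)
      also have "(exp (- ((norm x)\<^sup>2) / 2))\<^sup>2 = exp (- ((norm x)\<^sup>2))"
        by (simp add: power2_eq_square exp_add[symmetric])
      finally show ?thesis .
    qed
    define IU where "IU = (\<integral>\<^sup>+x. indicator UNIV x * ennreal ((cmod (f x))\<^sup>2) \<partial>lborel)"
    define Iw where "Iw = (\<integral>\<^sup>+x. indicator \<omega> x * ennreal ((cmod (f x))\<^sup>2) \<partial>lborel)"
    define I where "I = (\<integral>\<^sup>+z. indicator (ball x0 (2*r)) z * ennreal ((cmod (P z))\<^sup>2) \<partial>lborel)"
    define Mx where "Mx = ((4 * exp 1 / r) ^ N)\<^sup>2 * 4 ^ N * (2 ^ N * real N ^ N + A ^ (2*N))"
    define c0 where "c0 = Mx * real (Suc N) * 2 ^ CARD('n) / Vr"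
    have Mx0: "0 \<le> Mx" using A0 by (simp add: Mx_def)
    have c00: "0 \<le> c0" using Mx0 Vr by (simp add: c0_def)
    have pw: "ennreal ((cmod (f x))\<^sup>2) \<le> ennreal c0 * ennreal (exp (- ((norm x)\<^sup>2) / 2)) * I" for x
    proof -
      define L where "L = ((4 * exp 1 * (dist x x0 + r) / r) ^ N)\<^sup>2 * real (Suc N) * 2 ^ CARD('n)"
      have L0: "0 \<le> L" by (simp add: L_def)
      have "ennreal Vr * ennreal ((cmod (P x))\<^sup>2) \<le> ennreal L * I"
        using avg_bound[OF lp Pm r, of x0 x] unfolding EV L_def I_def .
      then have h: "ennreal ((cmod (P x))\<^sup>2) \<le> ennreal (L / Vr) * I"
        by (rule ediv) (use Vr L0 in auto)
      have pb: "L / Vr * exp (- ((norm x)\<^sup>2)) \<le> c0 * exp (- ((norm x)\<^sup>2) / 2)"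
      proof -
        have "((4 * exp 1 * (dist x x0 + r) / r) ^ N)\<^sup>2 * exp (- ((norm x)\<^sup>2)) \<le> Mx * exp (- ((norm x)\<^sup>2) / 2)"
          using PB[OF r, of x x0 N] unfolding Mx_def A_def .
        then have "((4 * exp 1 * (dist x x0 + r) / r) ^ N)\<^sup>2 * exp (- ((norm x)\<^sup>2)) * (real (Suc N) * 2 ^ CARD('n) / Vr)
            \<le> Mx * exp (- ((norm x)\<^sup>2) / 2) * (real (Suc N) * 2 ^ CARD('n) / Vr)"
          using Vr by (intro mult_right_mono) auto
        then show ?thesis by (simp add: L_def c0_def field_simps)
      qed
      have "ennreal ((cmod (f x))\<^sup>2) = ennreal (exp (- ((norm x)\<^sup>2))) * ennreal ((cmod (P x))\<^sup>2)"
        by (simp add: fsq ennreal_mult'' mult.commute)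
      also have "\<dots> \<le> ennreal (exp (- ((norm x)\<^sup>2))) * (ennreal (L / Vr) * I)"
        using h by (rule mult_left_mono) simp
      also have "\<dots> = ennreal (L / Vr * exp (- ((norm x)\<^sup>2))) * I"
      proof -
        have "ennreal (L / Vr * exp (- ((norm x)\<^sup>2))) = ennreal (L / Vr) * ennreal (exp (- ((norm x)\<^sup>2)))"
          by (rule ennreal_mult'') simp
        then show ?thesis by (simp only: mult_ac)
      qed
      also have "\<dots> \<le> ennreal (c0 * exp (- ((norm x)\<^sup>2) / 2)) * I"
        using pb by (intro mult_right_mono ennreal_leI) auto
      also have "\<dots> = ennreal c0 * ennreal (exp (- ((norm x)\<^sup>2) / 2)) * I"
        by (simp add: ennreal_mult'')
      finally show ?thesis .
    qed
    have gm: "(\<lambda>x::real^'n. ennreal (exp (- ((norm x)\<^sup>2) / 2))) \<in> borel_measurable lborel"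
    proof -
      have "(\<lambda>x::real^'n. exp (- ((norm x)\<^sup>2) / 2)) \<in> borel_measurable borel"
        by (intro borel_measurable_continuous_onI continuous_intros) auto
      from measurable_compose[OF this measurable_ennreal] show ?thesis by (simp add: o_def)
    qed
    have s1: "IU \<le> ennreal c0 * ennreal Gr * I"
    proof -
      have "IU \<le> (\<integral>\<^sup>+x. ennreal c0 * ennreal (exp (- ((norm (x::real^'n))\<^sup>2) / 2)) * I \<partial>lborel)"
        unfolding IU_def
      proof (rule nn_integral_mono)
        fix x :: "real ^ 'n"
        show "indicator UNIV x * ennreal ((cmod (f x))\<^sup>2) \<le> ennreal c0 * ennreal (exp (- ((norm x)\<^sup>2) / 2)) * I"
          using pw[of x] by simp
      qed
      also have "\<dots> = ennreal c0 * Gi * I"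
        using gm unfolding Gi_def by (simp add: nn_integral_multc nn_integral_cmult)
      finally show ?thesis by (simp add: GiGr)
    qed
    have s2: "I \<le> ennreal (exp (R\<^sup>2)) * Iw"
    proof -
      have "I \<le> (\<integral>\<^sup>+z. ennreal (exp (R\<^sup>2)) * (indicator \<omega> z * ennreal ((cmod (f z))\<^sup>2)) \<partial>lborel)"
        unfolding I_def
      proof (intro nn_integral_mono)
        fix z :: "real ^ 'n"
        show "indicator (ball x0 (2*r)) z * ennreal ((cmod (P z))\<^sup>2)
            \<le> ennreal (exp (R\<^sup>2)) * (indicator \<omega> z * ennreal ((cmod (f z))\<^sup>2))"
        proof (cases "z \<in> ball x0 (2*r)")
          case True
          then have zw: "z \<in> \<omega>" using B2 by auto
          have "norm z \<le> R"
            using True norm_triangle_ineq2[of z x0] unfolding R_def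
            by (simp add: dist_norm norm_minus_commute)
          then have "(norm z)\<^sup>2 \<le> R\<^sup>2" by (intro power_mono) auto
          then have "exp ((norm z)\<^sup>2) \<le> exp (R\<^sup>2)" by simp
          have "(cmod (P z))\<^sup>2 = exp ((norm z)\<^sup>2) * (cmod (f z))\<^sup>2"
            by (simp add: fsq exp_minus field_simps)
          also have "\<dots> \<le> exp (R\<^sup>2) * (cmod (f z))\<^sup>2"
            using \<open>exp ((norm z)\<^sup>2) \<le> exp (R\<^sup>2)\<close> by (intro mult_right_mono) auto
          finally have "ennreal ((cmod (P z))\<^sup>2) \<le> ennreal (exp (R\<^sup>2) * (cmod (f z))\<^sup>2)"
            by (rule ennreal_leI)
          then show ?thesis using True zw by (simp add: ennreal_mult'')
        qed simp
      qed
      also have "\<dots> = ennreal (exp (R\<^sup>2)) * Iw"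
      proof -
        have fm2: "(\<lambda>x. cmod (f x)) \<in> borel_measurable borel"
          using measurable_compose[OF fm borel_measurable_norm] by (simp add: o_def)
        have [measurable]: "\<omega> \<in> sets borel" using assms(1) by simp
        have "(\<lambda>z. indicator \<omega> z * ennreal ((cmod (f z))\<^sup>2)) \<in> borel_measurable lborel"
          using fm2 by measurable
        then show ?thesis unfolding Iw_def by (rule nn_integral_cmult)
      qed
      finally show ?thesis .
    qed
    define KN where "KN = Kc * Bb ^ N * (real N + 1) ^ N"
    have KN0: "0 \<le> KN" using Kc0 Bb0 by (simp add: KN_def)
    have cKN: "c0 * Gr * exp (R\<^sup>2) \<le> KN"
    proof -
      have "c0 * Gr * exp (R\<^sup>2) = (Kc / 2) * (Mx * (real N + 1))"
        by (simp add: c0_def Kc_def field_simps)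
      also have "\<dots> \<le> (Kc / 2) * (2 * Bb ^ N * (real N + 1) ^ N)"
        using Mbound[OF r A0, of N] Kc0 unfolding Mx_def Bb_def by (intro mult_left_mono) auto
      also have "\<dots> = KN" by (simp add: KN_def)
      finally show ?thesis .
    qed
    have main: "IU \<le> ennreal KN * Iw"
    proof -
      have "IU \<le> ennreal c0 * ennreal Gr * (ennreal (exp (R\<^sup>2)) * Iw)"
        using s1 s2 by (meson order_trans mult_left_mono zero_le)
      also have "\<dots> = ennreal (c0 * Gr * exp (R\<^sup>2)) * Iw"
        using c00 Gr0 by (simp add: ennreal_mult'' mult_ac)
      also have "\<dots> \<le> ennreal KN * Iw"
        using cKN by (intro mult_right_mono ennreal_leI) auto
      finally show ?thesis .
    qed
    have LU: "L2_norm_on UNIV f = sqrt (enn2real IU)"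
      unfolding IU_def by (rule L2_enn[OF fm]) simp
    have Lw: "L2_norm_on \<omega> f = sqrt (enn2real Iw)"
      unfolding Iw_def by (rule L2_enn[OF fm]) (use assms(1) in simp)
    define E where "E = C * exp (1/2 * real N * ln (real N + 1) + C * real N)"
    have E0: "0 \<le> E" using C1 by (simp add: E_def)
    have KE: "sqrt KN \<le> E" unfolding E_def KN_def by (rule Cb)
    show "L2_norm_on UNIV f \<le> C * exp (1/2 * real N * ln (real N + 1) + C * real N) * L2_norm_on \<omega> f"
      unfolding E_def[symmetric] LU Lw
    proof (cases "IU = \<infinity>")
      case True
      then show "sqrt (enn2real IU) \<le> E * sqrt (enn2real Iw)" using E0 by simp
    next
      case False
      have "Iw \<le> IU" unfolding Iw_def IU_def
        by (intro nn_integral_mono) (auto simp: indicator_def)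
      then have "Iw \<noteq> \<infinity>" using False by (auto simp: top_unique)
      then obtain w where w: "Iw = ennreal w" "0 \<le> w" by (cases Iw rule: ennreal_cases) auto
      obtain u where u: "IU = ennreal u" "0 \<le> u" using False by (cases IU rule: ennreal_cases) auto
      have "ennreal u \<le> ennreal (KN * w)" using main u w KN0 by (simp add: ennreal_mult'')
      then have uk: "u \<le> KN * w" using KN0 w by (simp add: ennreal_le_iff mult_nonneg_nonneg)
      have "sqrt u \<le> sqrt (KN * w)" using uk by simp
      also have "\<dots> = sqrt KN * sqrt w" by (simp add: real_sqrt_mult)
      also have "\<dots> \<le> E * sqrt w" using KE w by (intro mult_right_mono) auto
      finally show "sqrt (enn2real IU) \<le> E * sqrt (enn2real Iw)" using u w by simp
    qed
  qed
  then show ?thesis using C1 by blast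
qed


end
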